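(* Let $X$ be a convex subset of a uniformly convex normed space $(\widetilde{X},|\cdot|)$, and let $P,A\subseteq X$ be nonempty with $d(P,A)>0$. Let $\operatorname{dom}(P,A)=\{x\in X: d(x,P)\leq d(x,A)\}$. Then, with closure, interior and boundary taken relative to $X$ (with the topology induced by the norm), $$\partial(\operatorname{dom}(P,A))=\{x\in X: d(x,P)=d(x,A)\},$$ $$\operatorname{Int}(\operatorname{dom}(P,A))=\{x\in X: d(x,P)<d(x,A)\},$$ $$\operatorname{dom}(P,A)=\overline{\{x\in X: d(x,P)<d(x,A)\}}.$$
   Context: A normed space $(\widetilde{X},|\cdot|)$ is uniformly convex if for each $\epsilon\in(0,2]$ there is $\delta\in(0,1]$ such that for all $x,y\in\widetilde{X}$ with $|x|=|y|=1$ and $|x-y|\geq\epsilon$ one has $|(x+y)/2|\leq 1-\delta$. The metric is $d(x,y)=|x-y|$; for $x\in X$ and nonempty $S\subseteq X$, $d(x,S)=\inf\{d(x,s): s\in S\}$; and $d(P,A)=\inf\{d(p,a): p\in P, a\in A\}$. *)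

theory Defs
  imports "HOL-Analysis.Analysis"
begin

definition uniformly_convex :: "'a::real_normed_vector itself \<Rightarrow> bool" where
  "uniformly_convex (_ :: 'a itself) \<longleftrightarrow>
     (\<forall>\<epsilon>::real. 0 < \<epsilon> \<and> \<epsilon> \<le> 2 \<longrightarrow>
        (\<exists>\<delta>::real. 0 < \<delta> \<and> \<delta> \<le> 1 \<and>
           (\<forall>x y :: 'a. norm x = 1 \<and> norm y = 1 \<and> norm (x - y) \<ge> \<epsilon> \<longrightarrow>
              norm ((1/2) *\<^sub>R (x + y)) \<le> 1 - \<delta>)))"

definition dom_set :: "'a::metric_space set \<Rightarrow> 'a set \<Rightarrow> 'a set \<Rightarrow> 'a set" where
  "dom_set X P A = {x \<in> X. infdist x P \<le> infdist x A}"

end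

theory Submission
  imports Defs
begin

lemma infdist_near:
  assumes "A \<noteq> {}" "\<eta> > 0"
  shows "\<exists>a\<in>A. dist x a < infdist x A + \<eta>"
proof -
  have "(INF a\<in>A. dist x a) < infdist x A + \<eta>" using assms by (simp add: infdist_notempty)
  moreover have "bdd_below ((\<lambda>a. dist x a) ` A)" by (rule bdd_belowI[of _ 0]) auto
  ultimately show ?thesis using cINF_less_iff[OF assms(1)] by blast
qed

lemma infdist_ge:
  assumes "A \<noteq> {}" "\<And>a. a \<in> A \<Longrightarrow> m \<le> dist x a"
  shows "m \<le> infdist x A"
  using assms infdist_notempty cINF_greatest by metis

lemma key:
  fixes X P A :: "'a::real_normed_vector set"
  assumes uc: "uniformly_convex TYPE('a)"
    and cX: "convex X" and PX: "P \<subseteq> X" and "A \<subseteq> X"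
    and Pne: "P \<noteq> {}" and Ane: "A \<noteq> {}"
    and Dpos: "setdist P A > 0"
    and xX: "x \<in> X" and eq: "infdist x P = infdist x A" and e: "e > 0"
  shows "\<exists>y\<in>X. dist y x < e \<and> infdist y P < infdist y A"
proof -
  define r where "r = infdist x P"
  define D where "D = setdist P A"
  have D2r: "D \<le> 2 * r"
  proof (rule ccontr)
    assume "\<not> D \<le> 2 * r"
    hence h: "(D - 2*r)/4 > 0" by simp
    obtain p where p: "p \<in> P" "dist x p < r + (D - 2*r)/4"
      using infdist_near[OF Pne h] r_def by blast
    obtain a where a: "a \<in> A" "dist x a < r + (D - 2*r)/4"
      using infdist_near[OF Ane h] r_def eq by force
    have "D \<le> dist p a" using setdist_le_dist[OF p(1) a(1)] D_def by simp
    also have "\<dots> \<le> dist x p + dist x a" by (metis dist_commute dist_triangle)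
    finally have "D \<le> dist x p + dist x a" .
    with p(2) a(2) \<open>\<not> D \<le> 2 * r\<close> show False by (simp add: field_simps)
  qed
  have Dp: "D > 0" using Dpos D_def by simp
  have rp: "r > 0" using D2r Dp by simp
  define \<epsilon> where "\<epsilon> = min 1 (D / (4*r))"
  have ep: "0 < \<epsilon>" "\<epsilon> \<le> 2" "\<epsilon> \<le> D / (4*r)" using Dp rp by (auto simp: \<epsilon>_def)
  obtain \<delta> where dp: "0 < \<delta>" "\<delta> \<le> 1"
    and UC: "\<And>u v::'a. norm u = 1 \<Longrightarrow> norm v = 1 \<Longrightarrow> norm (u - v) \<ge> \<epsilon> \<Longrightarrow>
              norm ((1/2) *\<^sub>R (u + v)) \<le> 1 - \<delta>"
    using uc ep unfolding uniformly_convex_def by meson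
  define t where "t = min (1/4) (e / (4*r))"
  have tp: "0 < t" "t \<le> 1/4" "t * (2*r) \<le> e/2" using e rp
    by (auto simp: t_def min_def field_simps)
  define \<eta> where "\<eta> = min r (min (D/4) (\<delta>*t*r))"
  have etp: "0 < \<eta>" "\<eta> \<le> r" "\<eta> \<le> D/4" "\<eta> \<le> \<delta>*t*r"
    using rp Dp dp tp by (auto simp: \<eta>_def)
  obtain p where p: "p \<in> P" "dist x p < r + \<eta>"
    using infdist_near[OF Pne etp(1)] r_def by blast
  define w where "w = p - x"
  have nw: "norm w < r + \<eta>" "r \<le> norm w"
    using p infdist_le[OF p(1), of x] r_def by (auto simp: w_def dist_norm norm_minus_commute)
  define y where "y = x + t *\<^sub>R w"
  have yX: "y \<in> X"
  proof -
    have "(1 - t) *\<^sub>R x + t *\<^sub>R p \<in> X"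
      using convexD_alt[OF cX xX, of p t] PX p(1) tp by auto
    moreover have "(1 - t) *\<^sub>R x + t *\<^sub>R p = y"
      by (simp add: y_def w_def algebra_simps)
    ultimately show ?thesis by simp
  qed
  have dyx: "dist y x < e"
  proof -
    have "dist y x = t * norm w" using tp by (simp add: y_def dist_norm)
    also have "\<dots> \<le> t * (2*r)" using nw etp tp by (intro mult_left_mono) auto
    finally show ?thesis using tp e by simp
  qed
  have dyP: "infdist y P < (1 - t) * (r + \<eta>)"
  proof -
    have "p - y = (1 - t) *\<^sub>R w" by (simp add: y_def w_def algebra_simps)
    hence "dist y p = (1 - t) * norm w" using tp by (simp add: dist_norm norm_minus_commute)
    also have "\<dots> < (1 - t) * (r + \<eta>)" using nw tp by (intro mult_strict_left_mono) auto
    finally show ?thesis using infdist_le[OF p(1), of y] by simp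
  qed
  have claim: "(1 - t) * (r + \<eta>) \<le> dist y a" if aA: "a \<in> A" for a
  proof (rule ccontr)
    assume "\<not> (1 - t) * (r + \<eta>) \<le> dist y a"
    hence nu0: "dist y a < (1 - t) * (r + \<eta>)" by simp
    define b where "b = a - x"
    define u where "u = b - t *\<^sub>R w"
    have nu: "norm u < (1 - t) * (r + \<eta>)"
      using nu0 by (simp add: u_def b_def y_def dist_norm norm_minus_commute algebra_simps)
    have nb: "r \<le> norm b" using infdist_le[OF aA, of x] eq r_def by (simp add: b_def dist_norm norm_minus_commute)
    have ntw: "norm (t *\<^sub>R w) = t * norm w" using tp by simp
    have bu: "b = u + t *\<^sub>R w" by (simp add: u_def)
    have "norm b \<le> norm u + norm (t *\<^sub>R w)" unfolding bu by (rule norm_triangle_ineq)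
    hence nu_lo: "norm u \<ge> norm b - t * norm w" using ntw by linarith
    have tw_le: "t * norm w \<le> r/2"
    proof -
      have "t * norm w \<le> (1/4) * (2*r)" using tp nw etp by (intro mult_mono) auto
      thus ?thesis by simp
    qed
    have nu_ge: "norm u \<ge> r/2" using nu_lo nb tw_le by simp
    have wne: "norm w > 0" using nw rp by linarith
    have une: "norm u > 0" using nu_ge rp by linarith
    define uh where "uh = (1 / norm u) *\<^sub>R u"
    define wh where "wh = (1 / norm w) *\<^sub>R w"
    have nuh: "norm uh = 1" using une by (simp add: uh_def)
    have nwh: "norm wh = 1" using wne by (simp add: wh_def)
    have u_eq: "u = norm u *\<^sub>R uh" using une by (simp add: uh_def)
    have w_eq: "w = norm w *\<^sub>R wh" using wne by (simp add: wh_def)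
    show False
    proof (cases "norm (uh - wh) < \<epsilon>")
      case True
      define lam where "lam = t + norm u / norm w"
      have "b - lam *\<^sub>R w = u - (norm u / norm w) *\<^sub>R w" by (simp add: bu lam_def algebra_simps)
      also have "\<dots> = norm u *\<^sub>R uh - norm u *\<^sub>R wh" using une wne by (simp add: uh_def wh_def)
      also have "\<dots> = norm u *\<^sub>R (uh - wh)" by (simp add: scaleR_diff_right)
      finally have e1: "b - lam *\<^sub>R w = norm u *\<^sub>R (uh - wh)" .
      have "norm (b - lam *\<^sub>R w) = norm u * norm (uh - wh)" using e1 une by simp
      also have "\<dots> \<le> (r + \<eta>) * (D / (4*r))"
      proof (rule mult_mono)
        have "(1-t)*(r+\<eta>) \<le> r+\<eta>" using tp etp rp by (intro mult_left_le_one_le) auto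
        thus "norm u \<le> r + \<eta>" using nu by linarith
      qed (use True ep etp rp in auto)
      also have "\<dots> \<le> (2*r) * (D / (4*r))" using etp Dp rp by (intro mult_right_mono) auto
      also have "\<dots> = D/2" using rp by simp
      finally have h1: "norm (b - lam *\<^sub>R w) \<le> D/2" .
      have l1: "lam - 1 = (norm u + t * norm w - norm w) / norm w" using wne by (simp add: lam_def field_simps)
      have "lam *\<^sub>R w - w = (lam - 1) *\<^sub>R w" by (simp add: algebra_simps)
      hence e2: "lam *\<^sub>R w - w = ((norm u + t * norm w - norm w) / norm w) *\<^sub>R w" using l1 by simp
      have "norm (lam *\<^sub>R w - w) = \<bar>norm u + t * norm w - norm w\<bar>"
        using wne by (simp add: e2)
      also have "\<dots> < \<eta>"
      proof -
        have "(1-t)*r \<le> (1-t)*norm w" using nw tp by (intro mult_left_mono) auto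
        hence "norm u - (1 - t) * norm w < (1 - t) * (r + \<eta>) - (1 - t) * r"
          using nu by linarith
        also have "\<dots> = (1 - t) * \<eta>" by (simp add: algebra_simps)
        also have "\<dots> \<le> \<eta>" using tp etp by (simp add: mult_left_le_one_le)
        finally have up: "norm u + t * norm w - norm w < \<eta>" by (simp add: algebra_simps)
        have "norm u + t * norm w - norm w \<ge> r - norm w" using nu_lo nb by simp
        hence "norm u + t * norm w - norm w > - \<eta>" using nw by simp
        thus ?thesis using up by simp
      qed
      finally have h2: "norm (lam *\<^sub>R w - w) < \<eta>" .
      have "norm (b - w) \<le> norm (b - lam *\<^sub>R w) + norm (lam *\<^sub>R w - w)"
        using norm_triangle_ineq[of "b - lam *\<^sub>R w" "lam *\<^sub>R w - w"] by simp
      hence "norm (b - w) < D" using h1 h2 etp by simp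
      moreover have "D \<le> dist p a" using setdist_le_dist[OF p(1) aA] D_def by simp
      moreover have "dist p a = norm (b - w)" by (simp add: b_def w_def dist_norm norm_minus_commute)
      ultimately show False by simp
    next
      case False
      hence "norm ((1/2) *\<^sub>R (uh + wh)) \<le> 1 - \<delta>" using UC nuh nwh by simp
      hence nsum: "norm (uh + wh) \<le> 2 * (1 - \<delta>)" by simp
      define s where "s = t * norm w"
      have s_le: "s \<le> norm u" using tw_le nu_ge s_def by simp
      have s0: "s \<ge> 0" using tp wne s_def by simp
      have swh: "s *\<^sub>R wh = t *\<^sub>R w" using wne by (simp add: s_def wh_def)
      have "s *\<^sub>R (uh + wh) + (norm u - s) *\<^sub>R uh = norm u *\<^sub>R uh + s *\<^sub>R wh"
        by (simp add: algebra_simps)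
      also have "\<dots> = b" using swh u_eq bu by simp
      finally have "b = s *\<^sub>R (uh + wh) + (norm u - s) *\<^sub>R uh" by simp
      hence "norm b \<le> s * norm (uh + wh) + (norm u - s) * norm uh"
        using s0 s_le norm_triangle_ineq[of "s *\<^sub>R (uh + wh)" "(norm u - s) *\<^sub>R uh"] by simp
      also have "\<dots> \<le> s * (2 * (1 - \<delta>)) + (norm u - s)"
        using nsum s0 nuh by (simp add: mult_left_mono)
      finally have "norm b \<le> norm u + s - 2 * \<delta> * s" by (simp add: algebra_simps)
      moreover have "s \<ge> t * r" using nw tp s_def by simp
      moreover have "s < t * (r + \<eta>)" using nw tp s_def by simp
      moreover have "\<delta> * (t * r) \<le> \<delta> * s" using dp \<open>s \<ge> t * r\<close> by (intro mult_left_mono) auto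
      ultimately have "norm b < (1 - t) * (r + \<eta>) + t * (r + \<eta>) - 2 * \<delta> * (t * r)"
        using nu by linarith
      also have "\<dots> = r + \<eta> - 2 * \<delta> * t * r" by (simp add: algebra_simps)
      also have "\<dots> < r" using etp dp tp rp by simp
      finally show False using nb by simp
    qed
  qed
  have "(1 - t) * (r + \<eta>) \<le> infdist y A" using infdist_ge[OF Ane claim] by blast
  thus ?thesis using yX dyx dyP by force
qed

lemma key_closure:
  fixes X P A :: "'a::real_normed_vector set"
  assumes uc: "uniformly_convex TYPE('a)"
    and cX: "convex X" and PX: "P \<subseteq> X" and AX: "A \<subseteq> X"
    and Pne: "P \<noteq> {}" and Ane: "A \<noteq> {}"
    and Dpos: "setdist P A > 0"
    and xX: "x \<in> X" and eq: "infdist x P = infdist x A"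
  shows "x \<in> (top_of_set X) closure_of {x \<in> X. infdist x P < infdist x A}"
  unfolding in_closure_of
proof (intro conjI allI impI)
  show "x \<in> topspace (top_of_set X)" using xX by simp
  fix T assume T: "x \<in> T \<and> openin (top_of_set X) T"
  then obtain U where U: "open U" "T = X \<inter> U" by (auto simp: openin_open)
  then obtain e where e: "e > 0" "ball x e \<subseteq> U" using T open_contains_ball by blast
  obtain y where y: "y \<in> X" "dist y x < e" "infdist y P < infdist y A"
    using key[OF assms e(1)] by blast
  have "y \<in> U" using e y by (auto simp: dist_commute)
  thus "\<exists>y'. y' \<in> {x \<in> X. infdist x P < infdist x A} \<and> y' \<in> T" using y U by auto
qed

theorem theorem3p3:
  fixes X P A :: "'a::real_normed_vector set"
  assumes "uniformly_convex TYPE('a)"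
    and "convex X"
    and "P \<subseteq> X" and "A \<subseteq> X"
    and "P \<noteq> {}" and "A \<noteq> {}"
    and "setdist P A > 0"
  shows "((top_of_set X) frontier_of (dom_set X P A) = {x \<in> X. infdist x P = infdist x A})
       \<and> ((top_of_set X) interior_of (dom_set X P A) = {x \<in> X. infdist x P < infdist x A})
       \<and> dom_set X P A = (top_of_set X) closure_of {x \<in> X. infdist x P < infdist x A}"
proof -
  define f where "f = (\<lambda>x. infdist x P - infdist x A)"
  have cf: "continuous_on UNIV f" unfolding f_def by (intro continuous_intros)
  define E where "E = dom_set X P A"
  define L where "L = {x \<in> X. infdist x P < infdist x A}"
  define G where "G = {x \<in> X. infdist x A < infdist x P}"
  have E_eq: "E = X \<inter> {x. f x \<le> 0}" by (auto simp: E_def dom_set_def f_def)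
  have L_eq: "L = X \<inter> {x. f x < 0}" by (auto simp: L_def f_def)
  have cE: "closedin (top_of_set X) E" unfolding E_eq closedin_closed
    using closed_Collect_le[OF cf continuous_on_const, of 0] by auto
  have oL: "openin (top_of_set X) L" unfolding L_eq openin_open
    using open_Collect_less[OF cf continuous_on_const, of 0] by auto
  have LE: "L \<subseteq> E" by (auto simp: L_def E_def dom_set_def)
  have kL: "x \<in> (top_of_set X) closure_of L" if "x \<in> X" "infdist x P = infdist x A" for x
    unfolding L_def by (rule key_closure[OF assms that])
  have kG: "x \<in> (top_of_set X) closure_of G" if "x \<in> X" "infdist x P = infdist x A" for x
  proof -
    have s: "setdist A P > 0" using assms(7) by (metis setdist_sym)
    show ?thesis unfolding G_def
      by (rule key_closure[OF assms(1,2,4,3,6,5) s that(1) that(2)[symmetric]])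
  qed
  have clE: "(top_of_set X) closure_of E = E" using cE by (simp only: closure_of_eq)
  have intE: "(top_of_set X) interior_of E = L"
  proof
    show "L \<subseteq> (top_of_set X) interior_of E" using interior_of_maximal[OF LE oL] .
    show "(top_of_set X) interior_of E \<subseteq> L"
    proof
      fix x assume xi: "x \<in> (top_of_set X) interior_of E"
      have xE: "x \<in> E" using interior_of_subset[of "top_of_set X" E] xi by auto
      show "x \<in> L"
      proof (rule ccontr)
        assume "x \<notin> L"
        hence "x \<in> X" "infdist x P = infdist x A" using xE by (auto simp: L_def E_def dom_set_def)
        hence "x \<in> (top_of_set X) closure_of G" by (rule kG)
        hence "\<forall>T. x \<in> T \<and> openin (top_of_set X) T \<longrightarrow> (\<exists>y. y \<in> G \<and> y \<in> T)"
          unfolding in_closure_of by simp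
        moreover have "openin (top_of_set X) ((top_of_set X) interior_of E)" by simp
        ultimately obtain y where "y \<in> G" "y \<in> (top_of_set X) interior_of E"
          using xi by auto
        hence "y \<in> G" "y \<in> E" using interior_of_subset[of "top_of_set X" E] by auto
        thus False by (auto simp: G_def E_def dom_set_def)
      qed
    qed
  qed
  have clL: "(top_of_set X) closure_of L = E"
  proof
    show "(top_of_set X) closure_of L \<subseteq> E" by (rule closure_of_minimal[OF LE cE])
    show "E \<subseteq> (top_of_set X) closure_of L"
    proof
      fix x assume xE: "x \<in> E"
      show "x \<in> (top_of_set X) closure_of L"
      proof (cases "x \<in> L")
        case True
        thus ?thesis using closure_of_subset[of L "top_of_set X"] by (auto simp: L_def)
      next
        case False
        thus ?thesis using xE kL by (auto simp: L_def E_def dom_set_def)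
      qed
    qed
  qed
  have frE: "(top_of_set X) frontier_of E = {x \<in> X. infdist x P = infdist x A}"
    unfolding frontier_of_def clE intE by (auto simp: E_def L_def dom_set_def)
  show ?thesis using frE intE clL by (simp add: E_def L_def)
qed

end
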